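(* Let $d\in\mathbb{N}$ and let $P,Q\in\mathbb{C}[x]$. The following are equivalent: (i) there exist $\vec\theta=(\theta_0,\dots,\theta_d)\in\mathbb{R}^{d+1}$, $\vec\phi=(\phi_0,\dots,\phi_d)\in\mathbb{R}^{d+1}$ and $\lambda\in\mathbb{R}$ such that, for every unitary $U$ (on any finite-dimensional Hilbert space), $$\Big(\prod_{j=1}^{d} R(\theta_j,\phi_j,0)\,A\Big)R(\theta_0,\phi_0,\lambda)=\begin{bmatrix}P(U)&\cdot\\ Q(U)&\cdot\end{bmatrix};$$ (ii) $\deg P\le d$, $\deg Q\le d$, and $|P(x)|^2+|Q(x)|^2=1$ for all $x\in\mathbb{T}$. Moreover, for every choice of $\vec\theta,\vec\phi\in\mathbb{R}^{d+1}$, $\lambda\in\mathbb{R}$, the left-hand side of (i) has the block form $\begin{bmatrix}P(U)&\cdot\\ Q(U)&\cdot\end{bmatrix}$ for some polynomials $P,Q$ satisfying (ii).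
   Context: $\mathbb{T}=\{x\in\mathbb{C}:|x|=1\}$. For a unitary $U$ on a Hilbert space $\mathcal{H}$, operators on $\mathbb{C}^2\otimes\mathcal{H}$ are written as $2\times 2$ block matrices with respect to the first (ancilla qubit) factor; a dot denotes an unspecified block. The signal operator is $A=|0\rangle\langle 0|\otimes U+|1\rangle\langle 1|\otimes I=\begin{bmatrix}U&0\\0&I\end{bmatrix}$, and the signal processing operator is $R(\theta,\phi,\lambda)=\begin{bmatrix}e^{i(\lambda+\phi)}\cos\theta & e^{i\phi}\sin\theta\\ e^{i\lambda}\sin\theta & -\cos\theta\end{bmatrix}\otimes I$. The product is ordered so that the operator equals $R(\theta_d,\phi_d,0)A\,R(\theta_{d-1},\phi_{d-1},0)A\cdots R(\theta_1,\phi_1,0)A\,R(\theta_0,\phi_0,\lambda)$. *)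

theory Defs
  imports "Jordan_Normal_Form.Schur_Decomposition" "HOL-Computational_Algebra.Polynomial"
begin

definition unitary_mat :: "nat \<Rightarrow> complex mat \<Rightarrow> bool" where
  "unitary_mat n U \<longleftrightarrow> U \<in> carrier_mat n n \<and>
     U * mat_adjoint U = 1\<^sub>m n \<and> mat_adjoint U * U = 1\<^sub>m n"

definition poly_mat :: "nat \<Rightarrow> complex poly \<Rightarrow> complex mat \<Rightarrow> complex mat" where
  "poly_mat n p U = mat n n (\<lambda>(i,j). \<Sum>k\<le>degree p. coeff p k * (U ^\<^sub>m k) $$ (i,j))"

text \<open>Kronecker product of a 2x2 matrix [[a,b],[c,d]] with the n x n identity,
  written in block form with respect to the ancilla qubit.\<close>
definition qubit_tensor_id :: "nat \<Rightarrow> complex \<Rightarrow> complex \<Rightarrow> complex \<Rightarrow> complex \<Rightarrow> complex mat" where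
  "qubit_tensor_id n a b c d =
     four_block_mat (a \<cdot>\<^sub>m 1\<^sub>m n) (b \<cdot>\<^sub>m 1\<^sub>m n) (c \<cdot>\<^sub>m 1\<^sub>m n) (d \<cdot>\<^sub>m 1\<^sub>m n)"

definition R_op :: "nat \<Rightarrow> real \<Rightarrow> real \<Rightarrow> real \<Rightarrow> complex mat" where
  "R_op n \<theta> \<phi> lam = qubit_tensor_id n
     (exp (\<i> * complex_of_real (lam + \<phi>)) * complex_of_real (cos \<theta>))
     (exp (\<i> * complex_of_real \<phi>) * complex_of_real (sin \<theta>))
     (exp (\<i> * complex_of_real lam) * complex_of_real (sin \<theta>))
     (- complex_of_real (cos \<theta>))"

text \<open>Signal operator A = |0><0| tensor U + |1><1| tensor I.\<close>
definition A_op :: "nat \<Rightarrow> complex mat \<Rightarrow> complex mat" where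
  "A_op n U = four_block_mat U (0\<^sub>m n n) (0\<^sub>m n n) (1\<^sub>m n)"

text \<open>QSP sequence: qsp n U th ph la k =
  R(th k, ph k, 0) A R(th (k-1), ph (k-1), 0) A ... R(th 1, ph 1, 0) A R(th 0, ph 0, la).
  Only the entries th 0..th d, ph 0..ph d are used for qsp _ _ _ _ _ d.\<close>
fun qsp :: "nat \<Rightarrow> complex mat \<Rightarrow> (nat \<Rightarrow> real) \<Rightarrow> (nat \<Rightarrow> real) \<Rightarrow> real \<Rightarrow> nat \<Rightarrow> complex mat" where
  "qsp n U th ph la 0 = R_op n (th 0) (ph 0) la"
| "qsp n U th ph la (Suc k) = R_op n (th (Suc k)) (ph (Suc k)) 0 * A_op n U * qsp n U th ph la k"

definition blk00 :: "nat \<Rightarrow> complex mat \<Rightarrow> complex mat" where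
  "blk00 n M = mat n n (\<lambda>(i,j). M $$ (i,j))"
definition blk10 :: "nat \<Rightarrow> complex mat \<Rightarrow> complex mat" where
  "blk10 n M = mat n n (\<lambda>(i,j). M $$ (i + n, j))"

definition has_block_form :: "nat \<Rightarrow> complex mat \<Rightarrow> complex poly \<Rightarrow> complex poly \<Rightarrow> complex mat \<Rightarrow> bool" where
  "has_block_form n U P Q M \<longleftrightarrow> M \<in> carrier_mat (2*n) (2*n) \<and>
     blk00 n M = poly_mat n P U \<and> blk10 n M = poly_mat n Q U"

definition cond_ii :: "nat \<Rightarrow> complex poly \<Rightarrow> complex poly \<Rightarrow> bool" where
  "cond_ii d P Q \<longleftrightarrow> degree P \<le> d \<and> degree Q \<le> d \<and>
     (\<forall>x::complex. cmod x = 1 \<longrightarrow> (cmod (poly P x))\<^sup>2 + (cmod (poly Q x))\<^sup>2 = 1)"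

end

theory Submission
  imports Defs
begin


lemma pow_mat_Suc_left:
  assumes U: "U \<in> carrier_mat n n"
  shows "U ^\<^sub>m Suc k = U * U ^\<^sub>m k"
proof (induction k)
  case 0 then show ?case using U by simp
next
  case (Suc k)
  have "U ^\<^sub>m Suc (Suc k) = (U * U ^\<^sub>m k) * U" using Suc by simp
  also have "\<dots> = U * (U ^\<^sub>m k * U)" using U by (simp add: assoc_mult_mat[of _ n n _ n _ n])
  finally show ?case by simp
qed

lemma poly_mat_alt:
  assumes "degree p \<le> N"
  shows "poly_mat n p U = mat n n (\<lambda>(i,j). \<Sum>k\<le>N. coeff p k * (U ^\<^sub>m k) $$ (i,j))"
  unfolding poly_mat_def
proof (rule eq_matI, simp_all)
  fix i j
  show "(\<Sum>k\<le>degree p. coeff p k * (U ^\<^sub>m k) $$ (i, j)) = (\<Sum>k\<le>N. coeff p k * (U ^\<^sub>m k) $$ (i, j))"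
    by (rule sum.mono_neutral_left) (use assms in \<open>auto simp: coeff_eq_0\<close>)
qed

lemma poly_mat_carrier[simp]: "poly_mat n p U \<in> carrier_mat n n"
  unfolding poly_mat_def by simp

lemma poly_mat_add: "poly_mat n (p + q) U = poly_mat n p U + poly_mat n q U"
proof -
  let ?N = "max (degree p) (degree q)"
  have "degree (p+q) \<le> ?N" by (rule degree_add_le_max)
  then show ?thesis
    by (subst (1 2 3) poly_mat_alt[where N="?N"]) (auto intro!: eq_matI simp: sum.distrib algebra_simps)
qed

lemma poly_mat_smult: "poly_mat n (smult a p) U = a \<cdot>\<^sub>m poly_mat n p U"
proof -
  have "degree (smult a p) \<le> degree p" by (rule degree_smult_le)
  then show ?thesis
    by (subst (1 2) poly_mat_alt[where N="degree p"]) (auto intro!: eq_matI simp: sum_distrib_left algebra_simps)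
qed

lemma poly_mat_const: "U \<in> carrier_mat n n \<Longrightarrow> poly_mat n [:a:] U = a \<cdot>\<^sub>m 1\<^sub>m n"
  unfolding poly_mat_def by (auto intro!: eq_matI)

lemma poly_mat_pCons0:
  assumes U: "U \<in> carrier_mat n n"
  shows "poly_mat n (pCons 0 p) U = U * poly_mat n p U"
proof -
  let ?N = "degree p"
  have d: "degree (pCons 0 p) \<le> Suc ?N" by (simp add: degree_pCons_le)
  show ?thesis
  proof (rule eq_matI)
    fix i j assume ij: "i < dim_row (U * poly_mat n p U)" "j < dim_col (U * poly_mat n p U)"
    then have i: "i < n" and j: "j < n" using U by (auto simp: poly_mat_def)
    have "poly_mat n (pCons 0 p) U $$ (i,j) = (\<Sum>k\<le>Suc ?N. coeff (pCons 0 p) k * (U ^\<^sub>m k) $$ (i,j))"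
      using i j by (subst poly_mat_alt[OF d]) simp
    also have "\<dots> = (\<Sum>k\<le>?N. coeff p k * (U ^\<^sub>m Suc k) $$ (i,j))"
      by (subst sum.atMost_Suc_shift) simp
    also have "\<dots> = (\<Sum>k\<le>?N. coeff p k * (\<Sum>l<n. U $$ (i,l) * (U ^\<^sub>m k) $$ (l,j)))"
      using U i j by (simp only: pow_mat_Suc_left[OF U]) (simp add: scalar_prod_def lessThan_atLeast0)
    also have "\<dots> = (\<Sum>l<n. U $$ (i,l) * (\<Sum>k\<le>?N. coeff p k * (U ^\<^sub>m k) $$ (l,j)))"
      by (simp add: sum_distrib_left algebra_simps) (rule sum.swap)
    also have "\<dots> = (U * poly_mat n p U) $$ (i,j)"
      using U i j by (simp add: poly_mat_def scalar_prod_def lessThan_atLeast0)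
    finally show "poly_mat n (pCons 0 p) U $$ (i,j) = (U * poly_mat n p U) $$ (i,j)" .
  qed (use U in \<open>auto simp: poly_mat_def\<close>)
qed

fun PQ :: "(nat \<Rightarrow> real) \<Rightarrow> (nat \<Rightarrow> real) \<Rightarrow> real \<Rightarrow> nat \<Rightarrow> complex poly \<times> complex poly" where
  "PQ th ph la 0 = ([: exp (\<i> * complex_of_real (la + ph 0)) * complex_of_real (cos (th 0)) :],
                    [: exp (\<i> * complex_of_real la) * complex_of_real (sin (th 0)) :])"
| "PQ th ph la (Suc k) = (smult (exp (\<i> * complex_of_real (ph (Suc k))) * complex_of_real (cos (th (Suc k)))) (pCons 0 (fst (PQ th ph la k)))
       + smult (exp (\<i> * complex_of_real (ph (Suc k))) * complex_of_real (sin (th (Suc k)))) (snd (PQ th ph la k)),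
     smult (complex_of_real (sin (th (Suc k)))) (pCons 0 (fst (PQ th ph la k)))
       + smult (- complex_of_real (cos (th (Suc k)))) (snd (PQ th ph la k)))"

lemma RA_block:
  assumes U: "U \<in> carrier_mat n n"
  shows "R_op n t p 0 * A_op n U = four_block_mat
     ((exp (\<i> * complex_of_real p) * complex_of_real (cos t)) \<cdot>\<^sub>m U)
     ((exp (\<i> * complex_of_real p) * complex_of_real (sin t)) \<cdot>\<^sub>m 1\<^sub>m n)
     (complex_of_real (sin t) \<cdot>\<^sub>m U)
     ((- complex_of_real (cos t)) \<cdot>\<^sub>m 1\<^sub>m n)"
  unfolding R_op_def qubit_tensor_id_def A_op_def
  by (subst mult_four_block_mat[of _ n n _ n _ n]) (use U in auto)

lemma qsp_block:
  assumes U: "U \<in> carrier_mat n n"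
  shows "\<exists>X Y. X \<in> carrier_mat n n \<and> Y \<in> carrier_mat n n \<and>
     qsp n U th ph la k = four_block_mat (poly_mat n (fst (PQ th ph la k)) U) X (poly_mat n (snd (PQ th ph la k)) U) Y"
proof (induction k)
  case 0
  show ?case unfolding qsp.simps R_op_def qubit_tensor_id_def PQ.simps fst_conv snd_conv
    using U by (intro exI conjI) (auto simp: poly_mat_const[OF U])
next
  case (Suc k)
  then obtain X Y where XY: "X \<in> carrier_mat n n" "Y \<in> carrier_mat n n"
     "qsp n U th ph la k = four_block_mat (poly_mat n (fst (PQ th ph la k)) U) X (poly_mat n (snd (PQ th ph la k)) U) Y"
    by blast
  let ?e = "exp (\<i> * complex_of_real (ph (Suc k)))"
  let ?c = "complex_of_real (cos (th (Suc k)))"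
  let ?s = "complex_of_real (sin (th (Suc k)))"
  let ?P = "poly_mat n (fst (PQ th ph la k)) U"
  let ?Q = "poly_mat n (snd (PQ th ph la k)) U"
  have "qsp n U th ph la (Suc k) = four_block_mat ((?e * ?c) \<cdot>\<^sub>m U) ((?e * ?s) \<cdot>\<^sub>m 1\<^sub>m n) (?s \<cdot>\<^sub>m U) ((- ?c) \<cdot>\<^sub>m 1\<^sub>m n)
     * four_block_mat ?P X ?Q Y"
    using XY(3) RA_block[OF U] by simp
  also have "\<dots> = four_block_mat ((?e * ?c) \<cdot>\<^sub>m U * ?P + (?e * ?s) \<cdot>\<^sub>m 1\<^sub>m n * ?Q)
       ((?e * ?c) \<cdot>\<^sub>m U * X + (?e * ?s) \<cdot>\<^sub>m 1\<^sub>m n * Y)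
       (?s \<cdot>\<^sub>m U * ?P + (- ?c) \<cdot>\<^sub>m 1\<^sub>m n * ?Q)
       (?s \<cdot>\<^sub>m U * X + (- ?c) \<cdot>\<^sub>m 1\<^sub>m n * Y)"
    by (rule mult_four_block_mat[of _ n n _ n _ n _ _ n _ n]) (use U XY in auto)
  also have "(?e * ?c) \<cdot>\<^sub>m U * ?P + (?e * ?s) \<cdot>\<^sub>m 1\<^sub>m n * ?Q = poly_mat n (fst (PQ th ph la (Suc k))) U"
    using U by (simp only: PQ.simps fst_conv snd_conv poly_mat_add poly_mat_smult poly_mat_pCons0[OF U])
      (simp add: mult_smult_assoc_mat[OF _ poly_mat_carrier]
       mult_smult_distrib[OF _ poly_mat_carrier] mult_smult_assoc_mat[OF one_carrier_mat poly_mat_carrier] left_mult_one_mat[OF poly_mat_carrier])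
  also have "?s \<cdot>\<^sub>m U * ?P + (- ?c) \<cdot>\<^sub>m 1\<^sub>m n * ?Q = poly_mat n (snd (PQ th ph la (Suc k))) U"
    using U by (simp only: PQ.simps fst_conv snd_conv poly_mat_add poly_mat_smult poly_mat_pCons0[OF U])
      (simp add: mult_smult_assoc_mat[OF _ poly_mat_carrier]
       mult_smult_distrib[OF _ poly_mat_carrier] mult_smult_assoc_mat[OF one_carrier_mat poly_mat_carrier] left_mult_one_mat[OF poly_mat_carrier])
  finally show ?case using U XY by (intro exI conjI) auto
qed



lemma norm_rot:
  fixes c s :: real assumes cs: "c\<^sup>2 + s\<^sup>2 = 1"
  shows "(cmod (of_real c * u + of_real s * v))\<^sup>2 + (cmod (of_real s * u - of_real c * v))\<^sup>2
         = (cmod u)\<^sup>2 + (cmod v)\<^sup>2"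
proof -
  have "(c * Re u + s * Re v)\<^sup>2 + (c * Im u + s * Im v)\<^sup>2 + ((s * Re u - c * Re v)\<^sup>2 + (s * Im u - c * Im v)\<^sup>2)
     = (c\<^sup>2 + s\<^sup>2) * ((Re u)\<^sup>2 + (Im u)\<^sup>2 + (Re v)\<^sup>2 + (Im v)\<^sup>2)"
    by (simp add: power2_eq_square algebra_simps)
  then show ?thesis using cs by (simp add: cmod_power2)
qed

lemma norm_exp_i [simp]: "cmod (exp (\<i> * complex_of_real y)) = 1"
  by (metis cis_conv_exp norm_cis)

lemma PQ_degree: "degree (fst (PQ th ph la k)) \<le> k \<and> degree (snd (PQ th ph la k)) \<le> k"
proof (induction k)
  case 0 then show ?case by simp
next
  case (Suc k)
  let ?p = "fst (PQ th ph la k)" and ?q = "snd (PQ th ph la k)"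
  have a: "degree (pCons 0 ?p) \<le> Suc k" using Suc by (meson degree_pCons_le le_trans Suc_le_mono)
  have b: "degree ?q \<le> Suc k" using Suc by simp
  have "degree (smult x (pCons 0 ?p) + smult y ?q) \<le> Suc k" for x y
    by (rule order.trans[OF degree_add_le_max]) (use a b degree_smult_le order.trans in \<open>metis max.bounded_iff\<close>)
  then show ?case by (simp only: PQ.simps fst_conv snd_conv)
qed

lemma PQ_norm:
  assumes x: "cmod x = 1"
  shows "(cmod (poly (fst (PQ th ph la k)) x))\<^sup>2 + (cmod (poly (snd (PQ th ph la k)) x))\<^sup>2 = 1"
proof (induction k)
  case 0 then show ?case by (simp add: norm_mult)
next
  case (Suc k)
  let ?u = "x * poly (fst (PQ th ph la k)) x" and ?v = "poly (snd (PQ th ph la k)) x"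
  let ?e = "exp (\<i> * complex_of_real (ph (Suc k)))"
  let ?c = "cos (th (Suc k))" and ?s = "sin (th (Suc k))"
  have f1: "poly (fst (PQ th ph la (Suc k))) x = ?e * (of_real ?c * ?u + of_real ?s * ?v)"
    by (simp add: algebra_simps)
  have f2: "poly (snd (PQ th ph la (Suc k))) x = of_real ?s * ?u - of_real ?c * ?v"
    by (simp add: algebra_simps)
  have e1: "cmod (poly (fst (PQ th ph la (Suc k))) x) = cmod (of_real ?c * ?u + of_real ?s * ?v)"
    unfolding f1 norm_mult norm_exp_i by simp
  have e3: "cmod ?u = cmod (poly (fst (PQ th ph la k)) x)" using x by (simp add: norm_mult)
  have nr: "(cmod (of_real ?c * ?u + of_real ?s * ?v))\<^sup>2 + (cmod (of_real ?s * ?u - of_real ?c * ?v))\<^sup>2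
         = (cmod ?u)\<^sup>2 + (cmod ?v)\<^sup>2" by (rule norm_rot) simp
  show ?case unfolding e1 f2 nr e3 by (rule Suc.IH)
qed

definition sc :: "complex \<Rightarrow> complex mat" where "sc x = mat 1 1 (\<lambda>_. x)"

lemma sc_unitary: assumes "cmod x = 1" shows "unitary_mat 1 (sc x)"
proof -
  have "x * cnj x = 1" "cnj x * x = 1" using complex_norm_square[of x] assms by (simp_all add: mult.commute)
  then show ?thesis unfolding unitary_mat_def sc_def mat_adjoint_def
    by (auto intro!: eq_matI simp: scalar_prod_def mat_of_rows_def cols_def)
qed

lemma sc_pow: "(sc x ^\<^sub>m k) $$ (0,0) = x ^ k"
  by (induction k) (auto simp: sc_def scalar_prod_def)

lemma poly_mat_sc: "poly_mat 1 p (sc x) $$ (0,0) = poly p x"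
  unfolding poly_mat_def by (simp add: sc_pow poly_altdef)

lemma infinite_T: "infinite {x::complex. cmod x = 1}"
proof -
  let ?f = "\<lambda>n::nat. cis (1 / real (Suc n))"
  have "inj ?f"
  proof (rule injI)
    fix m n assume "?f m = ?f n"
    then have cc: "cos (1 / real (Suc m)) = cos (1 / real (Suc n))" by (metis cis.sel(1))
    have "1 / real (Suc m) = 1 / real (Suc n)"
    proof (rule cos_inj_pi[OF _ _ _ _ cc])
      have "1 / real (Suc k) \<le> 1" for k by simp
      then show "1 / real (Suc m) \<le> pi" "1 / real (Suc n) \<le> pi" using pi_ge_two by (meson dual_order.trans one_le_numeral)+
    qed simp_all
    then show "m = n" by simp
  qed
  then have "infinite (range ?f)" by (rule range_inj_infinite)
  moreover have "range ?f \<subseteq> {x. cmod x = 1}" by auto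
  ultimately show ?thesis using finite_subset by blast
qed

lemma poly_eq_on_T:
  fixes p q :: "complex poly"
  assumes "\<And>x. cmod x = 1 \<Longrightarrow> poly p x = poly q x"
  shows "p = q"
proof (rule ccontr)
  assume "p \<noteq> q"
  then have "finite {x. poly (p - q) x = 0}" by (intro poly_roots_finite) simp
  moreover have "{x::complex. cmod x = 1} \<subseteq> {x. poly (p - q) x = 0}" using assms by auto
  ultimately show False using infinite_T finite_subset by blast
qed



definition reflp :: "nat \<Rightarrow> complex poly \<Rightarrow> complex poly" where
  "reflp D P = (\<Sum>k\<le>D. monom (cnj (coeff P k)) (D - k))"

lemma coeff_reflp: "coeff (reflp D P) j = (if j \<le> D then cnj (coeff P (D - j)) else 0)"
proof -
  have "coeff (reflp D P) j = (\<Sum>k\<le>D. if k = D - j \<and> j \<le> D then cnj (coeff P k) else 0)"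
    unfolding reflp_def coeff_sum coeff_monom by (intro sum.cong) auto
  also have "\<dots> = (if j \<le> D then cnj (coeff P (D - j)) else 0)"
    by (cases "j \<le> D") (simp_all add: sum.delta')
  finally show ?thesis .
qed

lemma poly_sumD: fixes P :: "complex poly" assumes "degree P \<le> D" shows "poly P x = (\<Sum>k\<le>D. coeff P k * x ^ k)"
  by (subst poly_altdef, rule sum.mono_neutral_left) (use assms in \<open>auto simp: coeff_eq_0\<close>)

lemma poly_reflp:
  assumes x: "cmod x = 1" and d: "degree P \<le> D"
  shows "poly (reflp D P) x = x ^ D * cnj (poly P x)"
proof -
  have xc: "x * cnj x = 1" using complex_norm_square[of x] x by simp
  have "poly (reflp D P) x = (\<Sum>k\<le>D. cnj (coeff P k) * x ^ (D - k))"
    unfolding reflp_def poly_sum poly_monom by simp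
  also have "\<dots> = (\<Sum>k\<le>D. x ^ D * (cnj (coeff P k) * cnj x ^ k))"
  proof (rule sum.cong)
    fix k assume "k \<in> {..D}"
    then have "x ^ D = x ^ (D - k) * x ^ k" by (simp add: power_add[symmetric])
    then have "x ^ D * cnj x ^ k = x ^ (D - k) * (x * cnj x) ^ k" by (simp add: power_mult_distrib)
    then show "cnj (coeff P k) * x ^ (D - k) = x ^ D * (cnj (coeff P k) * cnj x ^ k)"
      using xc by (simp add: algebra_simps)
  qed simp
  also have "\<dots> = x ^ D * cnj (poly P x)"
    unfolding poly_sumD[OF d] by (simp add: sum_distrib_left)
  finally show ?thesis .
qed

lemma ortho:
  fixes P Q :: "complex poly"
  assumes D: "D > 0" and dP: "degree P \<le> D" and dQ: "degree Q \<le> D"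
    and T: "\<And>x. cmod x = 1 \<Longrightarrow> (cmod (poly P x))\<^sup>2 + (cmod (poly Q x))\<^sup>2 = 1"
  shows "coeff P D * cnj (coeff P 0) + coeff Q D * cnj (coeff Q 0) = 0"
proof -
  define F where "F = P * reflp D P + Q * reflp D Q - monom 1 D"
  have "F = 0"
  proof (rule poly_eq_on_T)
    fix x :: complex assume x: "cmod x = 1"
    have "poly F x = x ^ D * (poly P x * cnj (poly P x) + poly Q x * cnj (poly Q x) - 1)"
      unfolding F_def using poly_reflp[OF x dP] poly_reflp[OF x dQ] by (simp add: poly_monom algebra_simps)
    also have "poly P x * cnj (poly P x) + poly Q x * cnj (poly Q x) - 1
       = of_real ((cmod (poly P x))\<^sup>2 + (cmod (poly Q x))\<^sup>2 - 1)"
      by (simp only: complex_norm_square[symmetric] of_real_add of_real_diff of_real_1)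
    also have "\<dots> = 0" using T[OF x] by simp
    finally show "poly F x = poly 0 x" by simp
  qed
  have cm: "coeff (R * reflp D R) (2 * D) = coeff R D * cnj (coeff R 0)" if dR: "degree R \<le> D" for R
  proof -
    have "coeff (R * reflp D R) (2 * D) = (\<Sum>i\<le>2 * D. if i = D then coeff R D * cnj (coeff R 0) else 0)"
      unfolding coeff_mult
    proof (rule sum.cong)
      fix i assume "i \<in> {..2 * D}"
      show "coeff R i * coeff (reflp D R) (2 * D - i) = (if i = D then coeff R D * cnj (coeff R 0) else 0)"
      proof (cases "i < D")
        case True then show ?thesis by (simp add: coeff_reflp)
      next
        case False
        then show ?thesis using dR by (cases "i = D") (auto simp: coeff_reflp coeff_eq_0)
      qed
    qed simp
    also have "\<dots> = coeff R D * cnj (coeff R 0)" by (simp add: sum.delta')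
    finally show ?thesis .
  qed
  have "0 = coeff F (2 * D)" using \<open>F = 0\<close> by simp
  also have "\<dots> = coeff P D * cnj (coeff P 0) + coeff Q D * cnj (coeff Q 0)"
    unfolding F_def using D by (simp add: cm[OF dP] cm[OF dQ] coeff_monom)
  finally show ?thesis by simp
qed



lemma unit_exp: assumes "cmod w = 1" shows "\<exists>p::real. exp (\<i> * complex_of_real p) = w"
proof -
  have "w \<noteq> 0" using assms by auto
  then have "cis (Arg w) = sgn w" by (rule cis_Arg)
  also have "sgn w = w" using assms by (simp add: sgn_div_norm)
  finally show ?thesis by (metis cis_conv_exp)
qed

lemma exp_cnj: "exp (\<i> * complex_of_real p) * cnj (exp (\<i> * complex_of_real p)) = 1"
  using complex_norm_square[of "exp (\<i> * complex_of_real p)"] by simp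

lemma unit_part: "\<exists>w. cmod w = 1 \<and> w * complex_of_real (cmod z) = z"
proof (cases "z = 0")
  case True then show ?thesis by (intro exI[of _ 1]) simp
next
  case False
  then show ?thesis by (intro exI[of _ "z / complex_of_real (cmod z)"]) (simp add: norm_divide)
qed

lemma L1: "\<exists>t p::real. cnj (exp (\<i> * complex_of_real p)) * complex_of_real (cos t) * a + complex_of_real (sin t) * b = 0"
proof (cases "a = 0")
  case True then show ?thesis by (intro exI[of _ 0]) simp
next
  case a: False
  show ?thesis
  proof (cases "b = 0")
    case True then show ?thesis by (intro exI[of _ "pi/2"]) simp
  next
    case b: False
    define r where "r = sqrt ((cmod a)\<^sup>2 + (cmod b)\<^sup>2)"
    have r: "r > 0" using a unfolding r_def by (simp add: add_pos_nonneg)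
    have pos: "(cmod a)\<^sup>2 + (cmod b)\<^sup>2 > 0" using a by (simp add: add_pos_nonneg)
    have "(cmod b / r)\<^sup>2 + (cmod a / r)\<^sup>2 = ((cmod b)\<^sup>2 + (cmod a)\<^sup>2) / ((cmod a)\<^sup>2 + (cmod b)\<^sup>2)"
      using pos unfolding r_def by (simp add: power_divide add_divide_distrib)
    then have "(cmod b / r)\<^sup>2 + (cmod a / r)\<^sup>2 = 1" using pos a by (simp add: add.commute)
    then obtain t where ct: "cmod b / r = cos t" "cmod a / r = sin t" by (rule sincos_total_2pi)
    define w where "w = - a * cnj b / (of_real (cmod a) * of_real (cmod b))"
    have "cmod w = 1" unfolding w_def using a b by (simp add: norm_mult norm_divide)
    then obtain p where pw: "exp (\<i> * complex_of_real p) = w" using unit_exp by blast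
    have aa: "a * cnj a = of_real ((cmod a)\<^sup>2)" "b * cnj b = of_real ((cmod b)\<^sup>2)"
      by (simp_all only: complex_norm_square)
    have "cnj w * complex_of_real (cmod b / r) * a + complex_of_real (cmod a / r) * b
        = - (a * cnj a) * b / (of_real (cmod a) * of_real r)
          + complex_of_real (cmod a / r) * b"
      unfolding w_def using a b r by (simp add: field_simps)
    also have "\<dots> = 0" unfolding aa using a b r by (simp add: field_simps power2_eq_square)
    finally show ?thesis using ct pw by (intro exI[of _ t] exI[of _ p]) simp
  qed
qed



lemma angles_for_step:
  fixes p0 q0 pD qD :: complex
  assumes orth: "pD * cnj p0 + qD * cnj q0 = 0"
  shows "\<exists>t p::real. cnj (exp (\<i> * complex_of_real p)) * complex_of_real (cos t) * p0 + complex_of_real (sin t) * q0 = 0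
     \<and> cnj (exp (\<i> * complex_of_real p)) * complex_of_real (sin t) * pD - complex_of_real (cos t) * qD = 0"
proof (cases "p0 = 0 \<and> q0 = 0")
  case True
  obtain t' p where h: "cnj (exp (\<i> * complex_of_real p)) * complex_of_real (cos t') * pD + complex_of_real (sin t') * (- qD) = 0"
    using L1 by blast
  have "cos (pi/2 - t') = sin t'" "sin (pi/2 - t') = cos t'" by (simp_all add: cos_diff sin_diff)
  then show ?thesis using True h by (intro exI[of _ "pi/2 - t'"] exI[of _ p]) (simp add: algebra_simps)
next
  case False
  obtain t p where h: "cnj (exp (\<i> * complex_of_real p)) * complex_of_real (cos t) * p0 + complex_of_real (sin t) * q0 = 0"
    using L1 by blast
  define z where "z = cnj (exp (\<i> * complex_of_real p))"
  define c where "c = complex_of_real (cos t)"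
  define s where "s = complex_of_real (sin t)"
  have zz: "z * cnj z = 1" unfolding z_def using exp_cnj[of p] by (simp add: mult.commute)
  have h1: "z * c * p0 + s * q0 = 0" using h unfolding z_def c_def s_def .
  have cc: "cnj c = c" "cnj s = s" unfolding c_def s_def by simp_all
  have "cnj (z * c * p0 + s * q0) = 0" using h1 by simp
  then have "cnj z * c * cnj p0 + s * cnj q0 = 0" using cc by simp
  then have "z * (cnj z * c * cnj p0 + s * cnj q0) = 0" by simp
  moreover have "z * (cnj z * c * cnj p0 + s * cnj q0) = (z * cnj z) * c * cnj p0 + z * s * cnj q0"
    by (simp add: algebra_simps)
  ultimately have K: "c * cnj p0 + z * s * cnj q0 = 0" using zz by simp
  define E where "E = z * s * pD - c * qD"
  have "E * cnj q0 = pD * (c * cnj p0 + z * s * cnj q0) - c * (pD * cnj p0 + qD * cnj q0)"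
    unfolding E_def by (simp add: algebra_simps)
  then have E1: "E * cnj q0 = 0" using K orth by simp
  have "E * cnj p0 = - qD * (c * cnj p0 + z * s * cnj q0) + z * s * (pD * cnj p0 + qD * cnj q0)"
    unfolding E_def by (simp add: algebra_simps)
  then have E2: "E * cnj p0 = 0" using K orth by simp
  have "E = 0" using E1 E2 False by auto
  then show ?thesis using h1 unfolding E_def z_def c_def s_def by blast
qed

lemma step:
  fixes P Q :: "complex poly"
  assumes cnd: "cond_ii (Suc d) P Q"
  shows "\<exists>t p::real. \<exists>P' Q'. cond_ii d P' Q' \<and>
     P = smult (exp (\<i> * complex_of_real p) * complex_of_real (cos t)) (pCons 0 P')
       + smult (exp (\<i> * complex_of_real p) * complex_of_real (sin t)) Q' \<and>
     Q = smult (complex_of_real (sin t)) (pCons 0 P') + smult (- complex_of_real (cos t)) Q'"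
proof -
  let ?D = "Suc d"
  have dP: "degree P \<le> ?D" and dQ: "degree Q \<le> ?D"
    and T: "\<And>x. cmod x = 1 \<Longrightarrow> (cmod (poly P x))\<^sup>2 + (cmod (poly Q x))\<^sup>2 = 1"
    using cnd unfolding cond_ii_def by auto
  have orth: "coeff P ?D * cnj (coeff P 0) + coeff Q ?D * cnj (coeff Q 0) = 0"
    by (rule ortho[OF _ dP dQ T]) simp_all
  obtain t p where tp:
    "cnj (exp (\<i> * complex_of_real p)) * complex_of_real (cos t) * coeff P 0 + complex_of_real (sin t) * coeff Q 0 = 0"
    "cnj (exp (\<i> * complex_of_real p)) * complex_of_real (sin t) * coeff P ?D - complex_of_real (cos t) * coeff Q ?D = 0"
    using angles_for_step[OF orth] by blast
  define e where "e = exp (\<i> * complex_of_real p)"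
  define c where "c = complex_of_real (cos t)"
  define s where "s = complex_of_real (sin t)"
  have ee: "e * cnj e = 1" unfolding e_def by (rule exp_cnj)
  have cs: "c * c + s * s = 1" unfolding c_def s_def
    by (metis of_real_add of_real_mult of_real_1 sin_cos_squared_add3 add.commute)
  define X where "X = smult (cnj e * c) P + smult s Q"
  define Q' where "Q' = smult (cnj e * s) P + smult (- c) Q"
  have X0: "coeff X 0 = 0" using tp(1) unfolding X_def e_def c_def s_def by simp
  obtain a P' where XP: "X = pCons a P'" by (cases X)
  have a0: "a = 0" using X0 XP by simp
  have dX: "degree X \<le> ?D" unfolding X_def
    by (rule order.trans[OF degree_add_le_max]) (use dP dQ degree_smult_le order.trans in \<open>metis max.bounded_iff\<close>)
  have dP': "degree P' \<le> d"
  proof (cases "P' = 0")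
    case False then show ?thesis using dX XP a0 degree_pCons_eq by auto
  qed simp
  have dQ': "degree Q' \<le> d"
  proof (rule degree_le, intro allI impI)
    fix i assume "d < i"
    then consider "i = ?D" | "?D < i" by linarith
    then show "coeff Q' i = 0"
    proof cases
      case 1 then show ?thesis using tp(2) unfolding Q'_def e_def c_def s_def by (simp add: algebra_simps)
    next
      case 2 then show ?thesis using dP dQ unfolding Q'_def by (simp add: coeff_eq_0)
    qed
  qed
  have normT: "(cmod (poly P' x))\<^sup>2 + (cmod (poly Q' x))\<^sup>2 = 1" if x: "cmod x = 1" for x
  proof -
    have ce: "cmod (cnj e) = 1" unfolding e_def by simp
    have "poly X x = x * poly P' x" using XP a0 by simp
    then have n1: "cmod (poly P' x) = cmod (complex_of_real (cos t) * (cnj e * poly P x) + complex_of_real (sin t) * poly Q x)"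
      using x unfolding X_def c_def s_def by (simp add: norm_mult algebra_simps)
    have n2: "cmod (poly Q' x) = cmod (complex_of_real (sin t) * (cnj e * poly P x) - complex_of_real (cos t) * poly Q x)"
      unfolding Q'_def c_def s_def by (simp add: algebra_simps)
    have "(cmod (poly P' x))\<^sup>2 + (cmod (poly Q' x))\<^sup>2 = (cmod (cnj e * poly P x))\<^sup>2 + (cmod (poly Q x))\<^sup>2"
      unfolding n1 n2 by (rule norm_rot) simp
    also have "\<dots> = 1" using T[OF x] ce by (simp add: norm_mult)
    finally show ?thesis .
  qed
  have hX: "pCons 0 P' = X" using XP a0 by simp
  have cP: "P = smult (e * c) (pCons 0 P') + smult (e * s) Q'"
    unfolding hX
  proof (rule poly_eqI)
    fix n
    have "coeff (smult (e * c) X + smult (e * s) Q') n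
       = e * c * (cnj e * c * coeff P n + s * coeff Q n) + e * s * (cnj e * s * coeff P n - c * coeff Q n)"
      unfolding Q'_def X_def by (simp add: algebra_simps)
    also have "\<dots> = (e * cnj e) * (c * c + s * s) * coeff P n" by (simp add: algebra_simps)
    also have "\<dots> = coeff P n" using ee cs by simp
    finally show "coeff P n = coeff (smult (e * c) X + smult (e * s) Q') n" by simp
  qed
  have cQ: "Q = smult s (pCons 0 P') + smult (- c) Q'"
    unfolding hX
  proof (rule poly_eqI)
    fix n
    have "coeff (smult s X + smult (- c) Q') n
       = s * (cnj e * c * coeff P n + s * coeff Q n) - c * (cnj e * s * coeff P n - c * coeff Q n)"
      unfolding Q'_def X_def by (simp add: algebra_simps)
    also have "\<dots> = (c * c + s * s) * coeff Q n" by (simp add: algebra_simps)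
    also have "\<dots> = coeff Q n" using cs by simp
    finally show "coeff Q n = coeff (smult s X + smult (- c) Q') n" by simp
  qed
  have "cond_ii d P' Q'" unfolding cond_ii_def using dP' dQ' normT by blast
  then show ?thesis using cP cQ unfolding e_def c_def s_def by blast
qed



lemma PQ_cong:
  assumes "\<And>j. j \<le> k \<Longrightarrow> th j = th' j \<and> ph j = ph' j"
  shows "PQ th ph la k = PQ th' ph' la k"
  using assms by (induction k) auto

lemma exists_angles:
  assumes "cond_ii d P Q"
  shows "\<exists>th ph la. PQ th ph la d = (P, Q)"
  using assms
proof (induction d arbitrary: P Q)
  case 0
  then have dP: "degree P = 0" and dQ: "degree Q = 0" and T: "\<And>x. cmod x = 1 \<Longrightarrow> (cmod (poly P x))\<^sup>2 + (cmod (poly Q x))\<^sup>2 = 1"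
    unfolding cond_ii_def by auto
  obtain p0 where p0: "P = [:p0:]" using degree0_coeffs[OF dP] by blast
  obtain q0 where q0: "Q = [:q0:]" using degree0_coeffs[OF dQ] by blast
  have n1: "(cmod p0)\<^sup>2 + (cmod q0)\<^sup>2 = 1" using T[of 1] p0 q0 by simp
  obtain t where t: "cmod p0 = cos t" "cmod q0 = sin t" using sincos_total_2pi[OF n1] by metis
  obtain wp where wp: "cmod wp = 1" "wp * complex_of_real (cmod p0) = p0" using unit_part by blast
  obtain wq where wq: "cmod wq = 1" "wq * complex_of_real (cmod q0) = q0" using unit_part by blast
  obtain la where la: "exp (\<i> * complex_of_real la) = wq" using unit_exp[OF wq(1)] by blast
  have "cmod (wp * cnj wq) = 1" using wp wq by (simp add: norm_mult)
  then obtain ph where ph: "exp (\<i> * complex_of_real ph) = wp * cnj wq" using unit_exp by blast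
  have wqq: "wq * cnj wq = 1" using complex_norm_square[of wq] wq by simp
  have "exp (\<i> * complex_of_real (la + ph)) = exp (\<i> * complex_of_real la) * exp (\<i> * complex_of_real ph)"
    by (simp add: distrib_left exp_add)
  also have "\<dots> = wp" using la ph wqq by (simp add: algebra_simps)
  finally have e: "exp (\<i> * complex_of_real (la + ph)) = wp" .
  have "PQ (\<lambda>_. t) (\<lambda>_. ph) la 0 = (P, Q)"
    using e la t wp(2) wq(2) p0 q0 by (simp del: of_real_add)
  then show ?case by blast
next
  case (Suc d)
  obtain t p P' Q' where h: "cond_ii d P' Q'"
    "P = smult (exp (\<i> * complex_of_real p) * complex_of_real (cos t)) (pCons 0 P')
       + smult (exp (\<i> * complex_of_real p) * complex_of_real (sin t)) Q'"
    "Q = smult (complex_of_real (sin t)) (pCons 0 P') + smult (- complex_of_real (cos t)) Q'"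
    using step[OF Suc.prems] by blast
  obtain th ph la where IH: "PQ th ph la d = (P', Q')" using Suc.IH[OF h(1)] by blast
  have "PQ (th(Suc d := t)) (ph(Suc d := p)) la d = PQ th ph la d"
    by (rule PQ_cong) auto
  then have "PQ (th(Suc d := t)) (ph(Suc d := p)) la (Suc d) = (P, Q)"
    using IH h(2,3) by simp
  then show ?case by blast
qed

lemma blocks:
  assumes "A \<in> carrier_mat n n" "B \<in> carrier_mat n n" "C \<in> carrier_mat n n" "D \<in> carrier_mat n n"
  shows "blk00 n (four_block_mat A B C D) = A" "blk10 n (four_block_mat A B C D) = C"
    "four_block_mat A B C D \<in> carrier_mat (2*n) (2*n)"
  using assms by (auto simp: blk00_def blk10_def intro!: eq_matI)

lemma forward:
  assumes "unitary_mat n U"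
  shows "has_block_form n U (fst (PQ th ph la d)) (snd (PQ th ph la d)) (qsp n U th ph la d)"
proof -
  have U: "U \<in> carrier_mat n n" using assms unfolding unitary_mat_def by blast
  obtain X Y where "X \<in> carrier_mat n n" "Y \<in> carrier_mat n n"
     "qsp n U th ph la d = four_block_mat (poly_mat n (fst (PQ th ph la d)) U) X (poly_mat n (snd (PQ th ph la d)) U) Y"
    using qsp_block[OF U] by blast
  then show ?thesis unfolding has_block_form_def using blocks[OF poly_mat_carrier _ poly_mat_carrier] by simp
qed

lemma cond_PQ: "cond_ii d (fst (PQ th ph la d)) (snd (PQ th ph la d))"
  unfolding cond_ii_def using PQ_degree PQ_norm by blast

theorem theorem3:
  fixes d :: nat and P Q :: "complex poly"
  shows "((\<exists>(\<theta>::nat \<Rightarrow> real) (\<phi>::nat \<Rightarrow> real) (lam::real).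
            \<forall>(n::nat) (U::complex mat). unitary_mat n U \<longrightarrow>
              has_block_form n U P Q (qsp n U \<theta> \<phi> lam d))
          \<longleftrightarrow> cond_ii d P Q)
      \<and> (\<forall>(\<theta>::nat \<Rightarrow> real) (\<phi>::nat \<Rightarrow> real) (lam::real).
           \<exists>P' Q' :: complex poly. cond_ii d P' Q' \<and>
             (\<forall>(n::nat) (U::complex mat). unitary_mat n U \<longrightarrow>
                has_block_form n U P' Q' (qsp n U \<theta> \<phi> lam d)))"
proof (intro conjI iffI allI)
  fix th ph la
  show "\<exists>P' Q'. cond_ii d P' Q' \<and> (\<forall>n U. unitary_mat n U \<longrightarrow> has_block_form n U P' Q' (qsp n U th ph la d))"
    using cond_PQ forward by blast
next
  assume "cond_ii d P Q"
  then obtain th ph la where "PQ th ph la d = (P, Q)" using exists_angles by blast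
  then show "\<exists>th ph la. \<forall>n U. unitary_mat n U \<longrightarrow> has_block_form n U P Q (qsp n U th ph la d)"
    using forward by (metis fst_conv snd_conv)
next
  assume "\<exists>th ph la. \<forall>n U. unitary_mat n U \<longrightarrow> has_block_form n U P Q (qsp n U th ph la d)"
  then obtain th ph la where H: "\<And>n U. unitary_mat n U \<Longrightarrow> has_block_form n U P Q (qsp n U th ph la d)" by blast
  have "P = fst (PQ th ph la d) \<and> Q = snd (PQ th ph la d)"
  proof -
    have "poly P x = poly (fst (PQ th ph la d)) x \<and> poly Q x = poly (snd (PQ th ph la d)) x" if x: "cmod x = 1" for x
    proof -
      have u: "unitary_mat 1 (sc x)" by (rule sc_unitary[OF x])
      have "poly_mat 1 P (sc x) = poly_mat 1 (fst (PQ th ph la d)) (sc x)"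
        "poly_mat 1 Q (sc x) = poly_mat 1 (snd (PQ th ph la d)) (sc x)"
        using H[OF u] forward[OF u, of th ph la d] unfolding has_block_form_def by auto
      then show ?thesis by (metis poly_mat_sc)
    qed
    then show ?thesis using poly_eq_on_T by blast
  qed
  then show "cond_ii d P Q" using cond_PQ by simp
qed

end
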